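(* Let $h>0$ be fixed, let $d=2$, and let $\{z_j\}_{j\ge 1}\subset\mathbb{R}$ be an observed scalar time series. Assume there exist a matrix $B^*\in\mathbb{R}^{2\times 2}$ and a (hidden) scalar series $\{z_j^{*\dagger}\}_{j\ge1}\subset\mathbb{R}$ such that, writing $\boldsymbol x^{*\ddagger}_j=(z_j,z_j^{*\dagger})^{\top}$, the underlying true linear dynamics $\boldsymbol x^{*\ddagger}_{j+1}=B^*\boldsymbol x^{*\ddagger}_j$ hold for all $j=1,2,\ldots$. Given $n$ observations $z_1,\dots,z_n$, let $(\hat B,\{\hat z^{\dagger}_j\}_{j=1}^n)$ be any minimizer, over $B\in\mathbb{R}^{2\times2}$ and $\{z_j^{\dagger}\}_{j=1}^n\subset\mathbb{R}$, of the ARS loss $$\ell(B,\{z^{\dagger}_j\}_{j=1}^n)=\sum_{j=1}^{n-1}\big\|\boldsymbol x^{\ddagger}_{j+1}-B\boldsymbol x^{\ddagger}_j\big\|_2^2,\qquad \boldsymbol x^{\ddagger}_j=(z_j,z_j^{\dagger})^{\top},$$ and set $\hat{\boldsymbol x}^{\ddagger}_n=(z_n,\hat z^{\dagger}_n)^{\top}$. Then, for sufficiently large $n$, the ARS prediction $\hat z_{n+k}=(1,0)\hat B^k\hat{\boldsymbol x}^{\ddagger}_n$ coincides with the true value $z_{n+k}$ for every $k\in\mathbb{N}$.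
   Context: This is the autoregressive with slack time series (ARS) model in the case of a 2-dimensional state with one observed coordinate ($r=1$) and one missing coordinate ($s=1$): the missing coordinate is replaced by a slack time series $\{z_j^{\dagger}\}$ that is estimated jointly with the AR(1) transition matrix $B$ by minimizing the loss above. Here $z_j$ denotes the observation at time $jh$. *)

theory Defs
  imports "HOL-Analysis.Analysis"
begin

fun mat_pow :: "real^'n^'n \<Rightarrow> nat \<Rightarrow> real^'n^'n" where
  "mat_pow B 0 = mat 1"
| "mat_pow B (Suc k) = B ** mat_pow B k"

definition ars_state :: "(nat \<Rightarrow> real) \<Rightarrow> (nat \<Rightarrow> real) \<Rightarrow> nat \<Rightarrow> real^2" where
  "ars_state z zd j = vector [z j, zd j]"

definition ars_loss :: "(nat \<Rightarrow> real) \<Rightarrow> nat \<Rightarrow> real^2^2 \<Rightarrow> (nat \<Rightarrow> real) \<Rightarrow> real" where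
  "ars_loss z n B zd =
     (\<Sum>j=1..n-1. (norm (ars_state z zd (j+1) - B *v ars_state z zd j))\<^sup>2)"

text \<open>(B, zd) minimizes the loss over all matrices and all slack series
  (only the values zd 1..zd n enter the loss).\<close>
definition ars_minimizer :: "(nat \<Rightarrow> real) \<Rightarrow> nat \<Rightarrow> real^2^2 \<Rightarrow> (nat \<Rightarrow> real) \<Rightarrow> bool" where
  "ars_minimizer z n B zd \<longleftrightarrow>
     (\<forall>B' zd'. ars_loss z n B zd \<le> ars_loss z n B' zd')"

definition ars_pred :: "(nat \<Rightarrow> real) \<Rightarrow> nat \<Rightarrow> real^2^2 \<Rightarrow> (nat \<Rightarrow> real) \<Rightarrow> nat \<Rightarrow> real" where
  "ars_pred z n B zd k = (mat_pow B k *v ars_state z zd n) $ 1"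

end

theory Submission
  imports Defs
begin

lemma mv2:
  fixes B :: "real^2^2" and v :: "real^2"
  shows "(B *v v)$1 = B$1$1 * v$1 + B$1$2 * v$2"
    and "(B *v v)$2 = B$2$1 * v$1 + B$2$2 * v$2"
  by (simp_all add: matrix_vector_mult_def sum_2)

lemma rec2:
  fixes B :: "real^2^2" and W :: "nat \<Rightarrow> real^2"
  assumes "W (j+1) = B *v W j" "W (j+2) = B *v W (j+1)"
  shows "W (j+2) $ 1 = (B$1$1 + B$2$2) * W (j+1) $ 1
          - (B$1$1 * B$2$2 - B$1$2 * B$2$1) * W j $ 1"
proof -
  have h1: "W (j+2) $ 1 = B$1$1 * W (j+1)$1 + B$1$2 * W (j+1)$2"
    using assms(2) mv2 by simp
  have h2: "W (j+1) $ 2 = B$2$1 * W j$1 + B$2$2 * W j$2"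
    using assms(1) mv2 by simp
  have h3: "W (j+1) $ 1 = B$1$1 * W j$1 + B$1$2 * W j$2"
    using assms(1) mv2 by simp
  show ?thesis unfolding h1 h2 h3 by (simp add: algebra_simps)
qed

theorem proposition1:
  fixes z :: "nat \<Rightarrow> real"
  assumes "\<exists>(Bs :: real^2^2) (zs :: nat \<Rightarrow> real).
             \<forall>j\<ge>1. ars_state z zs (j+1) = Bs *v ars_state z zs j"
  shows "\<exists>N. \<forall>n\<ge>N. \<forall>(Bh :: real^2^2) (zh :: nat \<Rightarrow> real).
           ars_minimizer z n Bh zh \<longrightarrow> (\<forall>k. ars_pred z n Bh zh k = z (n+k))"
proof -
  obtain Bs :: "real^2^2" and zs where hs: "\<forall>j\<ge>1. ars_state z zs (j+1) = Bs *v ars_state z zs j"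
    using assms by blast
  define ts where "ts = Bs$1$1 + Bs$2$2"
  define ds where "ds = Bs$1$1 * Bs$2$2 - Bs$1$2 * Bs$2$1"
  have zrec: "z (j+2) = ts * z (j+1) - ds * z j" if "j \<ge> 1" for j
  proof -
    have a1: "ars_state z zs (j+1) = Bs *v ars_state z zs j" using hs that by simp
    have a2: "ars_state z zs (j+1+1) = Bs *v ars_state z zs (j+1)" using hs that by simp
    have "ars_state z zs (j+2) = Bs *v ars_state z zs (j+1)" using a2 by (simp add: numeral_2_eq_2)
    from rec2[OF a1 this] show ?thesis
      unfolding ars_state_def ts_def ds_def by simp
  qed
  have main: "ars_pred z n Bh zh k = z (n+k)"
    if n4: "n \<ge> 4" and mn: "ars_minimizer z n Bh zh" for n Bh zh k
  proof -
    have "ars_loss z n Bs zs = 0"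
      unfolding ars_loss_def using hs by (intro sum.neutral) auto
    hence "ars_loss z n Bh zh \<le> 0" using mn unfolding ars_minimizer_def by metis
    hence "(\<Sum>j=1..n-1. (norm (ars_state z zh (j+1) - Bh *v ars_state z zh j))\<^sup>2) = 0"
      unfolding ars_loss_def by (meson order_antisym sum_nonneg zero_le_power2)
    hence "\<forall>j\<in>{1..n-1}. (norm (ars_state z zh (j+1) - Bh *v ars_state z zh j))\<^sup>2 = 0"
      by (subst (asm) sum_nonneg_eq_0_iff) auto
    hence hh: "ars_state z zh (j+1) = Bh *v ars_state z zh j" if "1 \<le> j" "j < n" for j
      using that by auto
    define W where "W m = (if m \<le> n then ars_state z zh m
                        else mat_pow Bh (m-n) *v ars_state z zh n)" for m
    have Wstep: "W (m+1) = Bh *v W m" if "m \<ge> 1" for m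
    proof (cases "m < n")
      case True thus ?thesis using hh[of m] that by (simp add: W_def)
    next
      case False
      hence "m + 1 - n = Suc (m - n)" by auto
      thus ?thesis using False
        by (cases "m = n") (simp_all add: W_def matrix_vector_mul_assoc[symmetric])
    qed
    define t where "t = Bh$1$1 + Bh$2$2"
    define d where "d = Bh$1$1 * Bh$2$2 - Bh$1$2 * Bh$2$1"
    have Wrec: "W (m+2) $ 1 = t * W (m+1) $ 1 - d * W m $ 1" if "m \<ge> 1" for m
      using rec2[of W m Bh] Wstep[of m] Wstep[of "m+1"] that
      by (simp add: t_def d_def)
    have Wz: "W m $ 1 = z m" if "m \<le> n" for m
      using that by (simp add: W_def ars_state_def)
    define e where "e j = z (j+2) - t * z (j+1) + d * z j" for j
    have erec: "e (j+2) = ts * e (j+1) - ds * e j" if "j \<ge> 1" for j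
    proof -
      define A where "A i = z (i+2) - ts * z (i+1) + ds * z i" for i
      have A0: "A j = 0" "A (j+1) = 0" "A (j+2) = 0"
        using zrec[of j] zrec[of "j+1"] zrec[of "j+2"] that by (simp_all add: A_def)
      have "e (j+2) - ts * e (j+1) + ds * e j = A (j+2) - t * A (j+1) + d * A j"
        unfolding e_def A_def by (simp add: add.assoc ring_distribs)
      thus ?thesis using A0 by simp
    qed
    have e0: "e j = 0" if "1 \<le> j" "j + 2 \<le> n" for j
      using Wrec[of j] Wz[of j] Wz[of "j+1"] Wz[of "j+2"] that by (simp add: e_def)
    have eall: "e j = 0" if "j \<ge> 1" for j
      using that
    proof (induction j rule: less_induct)
      case (less j)
      show ?case
      proof (cases "j \<le> 2")
        case True thus ?thesis using e0 less.prems n4 by auto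
      next
        case False
        define i where "i = j - 2"
        have i: "j = i + 2" "i \<ge> 1" using False less.prems unfolding i_def by linarith+
        thus ?thesis using erec[of i] less.IH[of i] less.IH[of "i+1"] by simp
      qed
    qed
    have agree: "W m $ 1 = z m" if "m \<ge> 1" for m
      using that
    proof (induction m rule: less_induct)
      case (less m)
      show ?case
      proof (cases "m \<le> n")
        case True thus ?thesis using Wz by auto
      next
        case False
        define i where "i = m - 2"
        have i: "m = i + 2" "i \<ge> 1" using False less.prems n4 unfolding i_def by linarith+
        thus ?thesis using Wrec[of i] less.IH[of i] less.IH[of "i+1"] eall[of i]
          by (simp add: e_def)
      qed
    qed
    have "ars_pred z n Bh zh k = W (n+k) $ 1"
      by (cases "k = 0") (simp_all add: W_def ars_pred_def)
    also have "\<dots> = z (n+k)" using agree n4 by simp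
    finally show ?thesis .
  qed
  show ?thesis by (intro exI[of _ 4]) (auto intro: main)
qed

end
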